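(* For every positive integer $n$, \[ Z(n)\equiv(-1)^{\delta_{n}}\pmod{n}, \] where $\delta_n=1$ if $n$ is non-composite ($n=1$ or $n$ prime) and $\delta_n=0$ otherwise, and $Z(n)=\sum_{k=0}^{n-1}\frac{1+(-1)^{k}k!(n-k-1)!}{n}$. *)

theory Defs
  imports "HOL-Number_Theory.Number_Theory"
begin

definition delta :: "nat \<Rightarrow> nat" where
  "delta n = (if n = 1 \<or> prime n then 1 else 0)"

definition Z :: "nat \<Rightarrow> rat" where
  "Z n = (\<Sum>k<n. (1 + (-1) ^ k * fact k * fact (n - k - 1)) / of_nat n)"

end

theory Submission imports Defs begin

lemma tele: "(\<Sum>k<j. (-1)^k * ((b k::int) + b (Suc k))) = b 0 - (-1)^j * b j"
  by (induction j) (auto simp: algebra_simps)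

lemma term_id:
  assumes "k \<le> m"
  shows "(int m + 2) * (fact k * fact (m - k)) =
     fact k * fact (Suc m - k) + fact (Suc k) * (fact (Suc m - Suc k) :: int)"
proof -
  have e: "Suc m - k = Suc (m - k)" using assms by simp
  have "int (m-k) = int m - int k" using assms by simp
  then have h1: "fact (Suc m - k) = (int m - int k + 1) * (fact (m - k) :: int)"
    unfolding e by (simp add: algebra_simps)
  have h2: "fact (Suc k) = (int k + 1) * (fact k :: int)" by simp
  have h3: "Suc m - Suc k = m - k" by simp
  have g: "\<And>x y G F::int. (x+2)*(G*F) = G*((x-y+1)*F) + (y+1)*G*F" by (simp add: algebra_simps)
  show ?thesis unfolding h1 h2 h3 by (rule g)
qed

lemma key: "(int m + 2) * (\<Sum>k<Suc m. (-1)^k * fact k * fact (m - k) :: int)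
   = fact (Suc m) * (1 + (-1)^m)"
proof -
  define b where "b j = fact j * (fact (Suc m - j) :: int)" for j
  have "(int m + 2) * (\<Sum>k<Suc m. (-1)^k * fact k * fact (m - k) :: int)
     = (\<Sum>k<Suc m. (-1)^k * (b k + b (Suc k)))"
    unfolding sum_distrib_left
  proof (rule sum.cong)
    fix k assume "k \<in> {..<Suc m}"
    then have "k \<le> m" by simp
    have "(int m + 2) * ((-1)^k * fact k * fact (m - k)) = (-1)^k * ((int m + 2) * (fact k * fact (m - k)))"
      by (simp add: algebra_simps)
    also have "\<dots> = (-1)^k * (b k + b (Suc k))"
      unfolding b_def term_id[OF \<open>k \<le> m\<close>] ..
    finally show "(int m + 2) * ((-1)^k * fact k * fact (m - k)) = (-1)^k * (b k + b (Suc k))" .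
  qed simp
  also have "\<dots> = b 0 - (-1)^(Suc m) * b (Suc m)" by (rule tele)
  also have "\<dots> = fact (Suc m) * (1 + (-1)^m)" by (simp add: b_def algebra_simps)
  finally show ?thesis .
qed

lemma ab_dvd: fixes a b :: nat assumes "0 < a" "a < b" shows "a * b dvd fact b"
proof -
  have "a dvd fact (b - 1)" using assms by (intro dvd_fact) auto
  then have "a * b dvd b * fact (b - 1)" by (simp add: mult.commute)
  moreover have "fact b = b * (fact (b - 1) :: nat)" using assms fact_reduce[of b, where 'a=nat] by simp
  ultimately show ?thesis by simp
qed

lemma comp_dvd:
  assumes "n > 4" "\<not> prime n"
  shows "n dvd fact (n - 1)"
proof -
  obtain a where a: "a dvd n" "a \<noteq> 1" "a \<noteq> n" using assms prime_nat_iff[of n] by auto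
  then obtain b where nab: "n = a * b" by auto
  have a1: "a > 1" "b > 1" using a nab assms by (auto intro: ccontr simp: nat_neq_iff)
  show ?thesis
  proof (cases "a = b")
    case True
    have "a > 2" proof (rule ccontr)
      assume "\<not> a > 2"
      then have "a * a \<le> 2 * 2" by (intro mult_le_mono) auto
      then show False using assms nab True by simp
    qed
    then have le: "2 * a \<le> n - 1" proof -
      have "2 * a < a * a" using \<open>a > 2\<close> by (intro mult_strict_right_mono) auto
      moreover have "n = a * a" using nab True by simp
      ultimately show ?thesis by linarith
    qed
    have "n dvd a * (2 * a)" using nab True by simp
    also have "\<dots> dvd fact (2 * a)" using a1 by (intro ab_dvd) auto
    also have "\<dots> dvd fact (n - 1)" using le by (rule fact_dvd)
    finally show ?thesis .
  next
    case False
    have "\<exists>c d. n = c * d \<and> 1 < c \<and> c < d" using False nab a1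
    proof (cases "a < b")
      case True then show ?thesis using nab a1 by (intro exI[of _ a] exI[of _ b]) auto
    next
      case F: False then have "b < a" using False by simp
      then show ?thesis using nab a1 by (intro exI[of _ b] exI[of _ a]) auto
    qed
    then obtain c d where cd: "n = c * d" "1 < c" "c < d" by blast
    have "d \<le> n - 1" using cd assms
    proof -
      have "1 * d < c * d" using cd by (intro mult_strict_right_mono) auto
      then have "d < n" using cd by simp
      then show ?thesis by linarith
    qed
    have "n dvd fact d" using cd ab_dvd[of c d] by simp
    also have "\<dots> dvd fact (n - 1)" using \<open>d \<le> n - 1\<close> by (rule fact_dvd)
    finally show ?thesis .
  qed
qed

lemma Z_eq:
  assumes "n \<ge> 1"
  shows "Z n = of_int (int n + (\<Sum>k<n. (-1)^k * fact k * fact (n - k - 1))) / of_nat n"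
proof -
  have "Z n = (\<Sum>k<n. (1 + (-1) ^ k * fact k * fact (n - k - 1))) / of_nat n"
    unfolding Z_def by (simp add: sum_divide_distrib)
  also have "(\<Sum>k<n. (1 + (-1) ^ k * fact k * fact (n - k - 1)) :: rat) = 
     of_int (int n + (\<Sum>k<n. (-1)^k * fact k * fact (n - k - 1)))"
    by (simp add: sum.distrib)
  finally show ?thesis .
qed

lemma main_aux:
  fixes n :: nat
  assumes "n \<ge> 1"
  shows "\<exists>q. (\<Sum>k<n. (-1)^k * fact k * fact (n - k - 1) :: int) = int n * q \<and> [1 + q = (-1) ^ delta n] (mod int n)"
proof -
  obtain m where nm: "n = Suc m" using assms by (cases n) auto
  define S where "S = (\<Sum>k<n. (-1)^k * fact k * fact (n - k - 1) :: int)"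
  have SS: "S = (\<Sum>k<Suc m. (-1)^k * fact k * fact (m - k))" unfolding S_def nm by simp
  have K: "(int m + 2) * S = fact n * (1 + (-1)^m)" unfolding SS nm by (rule key)
  show ?thesis
  proof (cases "even m")
    case False
    then have "S = 0" using K by simp
    moreover have "[1 = (-1) ^ delta n] (mod int n)"
    proof (cases "n = 2")
      case True then show ?thesis by (simp add: delta_def cong_def)
    next
      case n2: False
      have en: "even n" using False nm by simp
      then have "n > 2" using n2 assms by presburger
      then have "\<not> prime n" using en prime_odd_nat[of n] by auto
      moreover have "n \<noteq> 1" using en by auto
      ultimately show ?thesis by (simp add: delta_def)
    qed
    ultimately show ?thesis unfolding S_def by (intro exI[of _ 0]) simp
  next
    case True
    show ?thesis
    proof (cases "m = 0")
      case True
      then show ?thesis using nm by (intro exI[of _ 1]) (simp add: cong_def)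
    next
      case m0: False
      with True have m2: "m \<ge> 2" by presburger
      define h where "h = m div 2 + 1"
      have h2: "int m + 2 = 2 * int h" unfolding h_def using True by auto
      have "h dvd fact m" using m2 unfolding h_def by (intro dvd_fact) auto
      then obtain r where r: "fact m = int h * r" by (metis of_nat_dvd_iff of_nat_fact dvdE)
      have "2 * int h * S = 2 * (int n * (int h * r))" using K h2 True
        by (simp add: nm r algebra_simps)
      then have "(2 * int h) * S = (2 * int h) * (int n * r)" by (simp add: algebra_simps)
      moreover have "2 * int h \<noteq> 0" unfolding h_def by simp
      ultimately have Sr: "S = int n * r" by simp
      have cong1: "[2 * fact m = r] (mod int n)"
      proof -
        have "2 * fact m = (2 * int h) * r" using r by simp
        also have "\<dots> = (int m + 2) * r" using h2 by simp
        also have "\<dots> = int n * r + r" using nm by (simp add: algebra_simps)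
        finally have "2 * fact m = int n * r + r" .
        then show ?thesis by (simp add: cong_iff_dvd_diff)
      qed
      show ?thesis
      proof (cases "prime n")
        case True
        have "[fact m = -1] (mod int n)" using wilson_theorem[of n] True nm by simp
        then have "[2 * fact m = 2 * -1] (mod int n)" by (rule cong_mult[OF cong_refl])
        then have "[r = -2] (mod int n)" using cong1 by (metis cong_sym cong_trans mult_minus_right mult.right_neutral)
        then have "[1 + r = 1 + -2] (mod int n)" by (rule cong_add[OF cong_refl])
        then show ?thesis using Sr True by (intro exI[of _ r]) (simp add: S_def delta_def)
      next
        case False
        have "n > 4" using False \<open>even m\<close> nm m2 
        proof -
          have "n \<noteq> 3" using False by auto
          then show ?thesis using \<open>even m\<close> nm m2 by presburger
        qed
        then have "n dvd fact m" using comp_dvd[OF _ False] nm by simp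
        then have "int n dvd fact m" by (metis of_nat_dvd_iff of_nat_fact)
        then have "int n dvd 2 * fact m" by simp
        then have "int n dvd r" using cong1 by (metis cong_dvd_iff)
        then have "[1 + r = 1] (mod int n)" by (simp add: cong_iff_dvd_diff)
        moreover have "n \<noteq> 1" using nm m2 by simp
        ultimately show ?thesis using Sr False by (intro exI[of _ r]) (simp add: S_def delta_def)
      qed
    qed
  qed
qed

theorem mainTheorem8:
  fixes n :: nat
  assumes "n \<ge> 1"
  shows "\<exists>m::int. Z n = of_int m \<and> [m = (-1) ^ delta n] (mod int n)"
proof -
  obtain q where q: "(\<Sum>k<n. (-1)^k * fact k * fact (n - k - 1) :: int) = int n * q"
     "[1 + q = (-1) ^ delta n] (mod int n)" using main_aux[OF assms] by blast
  have "Z n = of_int (1 + q)" unfolding Z_eq[OF assms] q(1) using assms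
    by (simp add: field_simps)
  then show ?thesis using q(2) by blast
qed

end
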